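(* Let $n\geq2$ and $1\leq k\leq n$ be integers and let $\overline\eta:\Lambda^1(\mathbb R^n)\to\Lambda^k(\mathbb R^n)$ be a linear map. Then there is $\eta\in\Lambda^{k-1}(\mathbb R^n)$ such that $\overline\eta(\theta)=\theta\wedge\eta$ for every $\theta\in\Lambda^1(\mathbb R^n)$ if and only if $\theta\wedge\overline\eta(\theta)=0$ for every $\theta\in\Lambda^1(\mathbb R^n)$.
   Context: $\Lambda^k(\mathbb R^n)$ denotes the real vector space of alternating $k$-linear forms on $\mathbb R^n$, with $\Lambda^0(\mathbb R^n)=\mathbb R$, and $\wedge$ is the exterior product. *)

theory Defs
  imports "HOL-Analysis.Analysis" "HOL-Combinatorics.Permutations"
begin

text \<open>A k-form on R^n (n = CARD('n)) is a function of a sequence of vectors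
  (indexed by nat) that depends only on the first k arguments, is linear in each
  of them, and vanishes whenever two of them coincide (alternating).
  For k = 0 these are exactly the constant functions, i.e. Lambda^0 = R.\<close>

type_synonym 'n form = "(nat \<Rightarrow> real^'n) \<Rightarrow> real"

definition alt_form :: "nat \<Rightarrow> 'n::finite form \<Rightarrow> bool" where
  "alt_form k \<omega> \<longleftrightarrow>
     (\<forall>v w. (\<forall>i<k. v i = w i) \<longrightarrow> \<omega> v = \<omega> w) \<and>
     (\<forall>v. \<forall>i<k. linear (\<lambda>x. \<omega> (v(i := x)))) \<and>
     (\<forall>v i j. i < k \<and> j < k \<and> i \<noteq> j \<and> v i = v j \<longrightarrow> \<omega> v = 0)"

definition wedge :: "nat \<Rightarrow> nat \<Rightarrow> 'n::finite form \<Rightarrow> 'n form \<Rightarrow> 'n form" where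
  "wedge k l \<alpha> \<beta> = (\<lambda>v. (\<Sum>\<sigma>\<in>{\<sigma>. \<sigma> permutes {..<k+l}}.
        of_int (sign \<sigma>) * \<alpha> (\<lambda>i. v (\<sigma> i)) * \<beta> (\<lambda>i. v (\<sigma> (i + k))))
      / (fact k * fact l))"

end

theory Submission
  imports Defs
begin

definition dd :: "nat \<Rightarrow> nat \<Rightarrow> nat" where "dd m j = (if j < m then j else Suc j)"
definition cyc :: "nat \<Rightarrow> nat \<Rightarrow> nat" where
  "cyc m j = (if j = 0 then m else if j \<le> m then j - 1 else j)"
definition liftp :: "(nat \<Rightarrow> nat) \<Rightarrow> nat \<Rightarrow> nat" where
  "liftp \<tau> j = (if j = 0 then 0 else Suc (\<tau> (j - 1)))"
definition vcons :: "'a \<Rightarrow> (nat \<Rightarrow> 'a) \<Rightarrow> nat \<Rightarrow> 'a" where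
  "vcons a w j = (if j = 0 then a else w (j - 1))"

lemma alt_dep: "alt_form k \<beta> \<Longrightarrow> (\<And>i. i < k \<Longrightarrow> v i = w i) \<Longrightarrow> \<beta> v = \<beta> w"
  unfolding alt_form_def by blast
lemma alt_lin: "alt_form k \<beta> \<Longrightarrow> i < k \<Longrightarrow> linear (\<lambda>x. \<beta> (v(i:=x)))"
  unfolding alt_form_def by blast
lemma alt_zero: "alt_form k \<beta> \<Longrightarrow> i < k \<Longrightarrow> j < k \<Longrightarrow> i \<noteq> j \<Longrightarrow> v i = v j \<Longrightarrow> \<beta> v = 0"
  unfolding alt_form_def by blast

lemma alt_add: "alt_form k \<beta> \<Longrightarrow> i < k \<Longrightarrow> \<beta> (v(i:=x+y)) = \<beta> (v(i:=x)) + \<beta> (v(i:=y))"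
  using linear_add[OF alt_lin] by blast

lemma alt_swap:
  assumes "alt_form k \<beta>" "a < k" "b < k" "a \<noteq> b"
  shows "\<beta> (v \<circ> Transposition.transpose a b) = - \<beta> v"
proof -
  define s where "s = v a + v b"
  have 0: "\<beta> (v(a:=s, b:=s)) = 0" by (rule alt_zero[OF assms(1,2,3,4)]) auto
  have 1: "\<beta> (v(a:=s, b:=s)) = \<beta> (v(a:=s, b:=v a)) + \<beta> (v(a:=s, b:=v b))"
    unfolding s_def using alt_add[OF assms(1,3)] by blast
  have "v(a:=s, b:=v a) = v(b:=v a, a:= v a + v b)" using assms(4) s_def by (auto simp: fun_eq_iff)
  then have 2: "\<beta> (v(a:=s, b:=v a)) = \<beta> (v(b:=v a, a:= v a)) + \<beta> (v(b:=v a, a:= v b))"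
    using alt_add[OF assms(1,2)] by simp
  have 3: "\<beta> (v(b:=v a, a:= v a)) = 0" by (rule alt_zero[OF assms(1,2,3,4)]) auto
  have 4: "v(b:=v a, a:= v b) = v \<circ> Transposition.transpose a b"
    by (auto simp: fun_eq_iff Transposition.transpose_def)
  have "v(a:=s, b:=v b) = v(a:=v a + v b)" using assms(4) s_def by (auto simp: fun_eq_iff)
  then have 5: "\<beta> (v(a:=s, b:=v b)) = \<beta> (v(a:=v a)) + \<beta> (v(a:=v b))"
    using alt_add[OF assms(1,2)] by simp
  have 6: "\<beta> (v(a:=v b)) = 0" by (rule alt_zero[OF assms(1,2,3,4)]) auto
  show ?thesis using 0 1 2 3 4 5 6 by simp
qed

lemma alt_perm:
  assumes "alt_form k \<beta>" "\<tau> permutes {..<k}"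
  shows "\<beta> (v \<circ> \<tau>) = of_int (sign \<tau>) * \<beta> v"
  using assms(2) finite_lessThan assms(2)
proof (induction arbitrary: v rule: permutes_induct)
  case id
  then show ?case by simp
next
  case (swap a b p)
  have pp: "permutation p" using swap.hyps(4) permutation_permutes by blast
  have "\<beta> (v \<circ> (Transposition.transpose a b \<circ> p)) = \<beta> ((v \<circ> Transposition.transpose a b) \<circ> p)"
    by (simp add: o_assoc)
  also have "\<dots> = of_int (sign p) * \<beta> (v \<circ> Transposition.transpose a b)"
    using swap.IH swap.hyps(4) by blast
  also have "\<dots> = - of_int (sign p) * \<beta> v" using alt_swap[OF assms(1)] swap.hyps by simp
  moreover have "sign (Transposition.transpose a b \<circ> p) = - sign p"
    using swap.hyps by (simp add: sign_compose[OF permutation_swap_id pp] sign_swap_id)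
  ultimately show ?case by (simp del: o_apply add: comp_def[symmetric])
qed

lemma cyc_0[simp]: "cyc m 0 = m" by (simp add: cyc_def)
lemma cyc_Suc_arg[simp]: "cyc m (Suc j) = dd m j" by (simp add: cyc_def dd_def)

lemma cyc_Suc: "cyc (Suc m) = Transposition.transpose m (Suc m) \<circ> cyc m"
  by (auto simp: fun_eq_iff cyc_def Transposition.transpose_def)

lemma cyc_perm: "m < K \<Longrightarrow> cyc m permutes {..<K} \<and> sign (cyc m) = (-1)^m"
proof (induction m)
  case 0
  have "cyc 0 = id" by (auto simp: fun_eq_iff cyc_def)
  then show ?case by (simp add: permutes_id del: id_apply)
next
  case (Suc m)
  then have h: "cyc m permutes {..<K}" "sign (cyc m) = (-1)^m" by auto
  have t: "Transposition.transpose m (Suc m) permutes {..<K}"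
    using Suc.prems by (intro permutes_swap_id) auto
  have pc: "permutation (cyc m)" by (metis finite_lessThan permutation_permutes h(1))
  have "sign (Transposition.transpose m (Suc m) \<circ> cyc m) = sign (Transposition.transpose m (Suc m)) * sign (cyc m)"
    by (rule sign_compose[OF permutation_swap_id pc])
  then have "sign (Transposition.transpose m (Suc m) \<circ> cyc m) = - sign (cyc m)"
    by (simp add: sign_swap_id)
  then show ?case unfolding cyc_Suc using h permutes_compose[OF h(1) t] by (simp del: o_apply; blast)
qed

lemma liftp_Suc[simp]: "liftp \<tau> (Suc i) = Suc (\<tau> i)" by (simp add: liftp_def)
lemma liftp_0[simp]: "liftp \<tau> 0 = 0" by (simp add: liftp_def)

lemma liftp_perm:
  assumes "\<tau> permutes {..<k}"
  shows "liftp \<tau> permutes {..<Suc k} \<and> sign (liftp \<tau>) = sign \<tau>"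
  using assms finite_lessThan assms
proof (induction rule: permutes_induct)
  case id
  have "liftp id = id" by (auto simp: fun_eq_iff liftp_def)
  then show ?case by (simp add: permutes_id del: id_apply)
next
  case (swap a b p)
  have e: "liftp (Transposition.transpose a b \<circ> p) = Transposition.transpose (Suc a) (Suc b) \<circ> liftp p"
    by (auto simp: fun_eq_iff liftp_def Transposition.transpose_def)
  have pp: "permutation p" "permutation (liftp p)"
    using swap permutation_permutes by (metis finite_lessThan)+
  have t: "Transposition.transpose (Suc a) (Suc b) permutes {..<Suc k}"
    using swap.hyps by (intro permutes_swap_id) auto
  have s1: "sign (Transposition.transpose (Suc a) (Suc b) \<circ> liftp p) = - sign (liftp p)"
    using sign_compose[OF permutation_swap_id pp(2)] swap.hyps by (simp add: sign_swap_id)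
  have s2: "sign (Transposition.transpose a b \<circ> p) = - sign p"
    using sign_compose[OF permutation_swap_id pp(1)] swap.hyps by (simp add: sign_swap_id)
  have "liftp p permutes {..<Suc k}" "sign (liftp p) = sign p" using swap.IH swap.hyps(4) by auto
  then show ?case unfolding e s1 s2 using permutes_compose[OF _ t, of "liftp p"] by (intro conjI) (blast, simp)
qed

lemma liftp_inj: "liftp \<tau> = liftp \<tau>' \<Longrightarrow> \<tau> = \<tau>'"
  by (metis liftp_Suc nat.inject ext)

definition lap :: "nat \<Rightarrow> 'n::finite form \<Rightarrow> 'n form \<Rightarrow> 'n form" where
  "lap k \<theta> \<beta> v = (\<Sum>m<Suc k. (-1)^m * \<theta> (\<lambda>_. v m) * \<beta> (v \<circ> dd m))"

lemma sign_sq_real: "(of_int (sign p) :: real) * of_int (sign p) = 1"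
  by (metis of_int_1 of_int_mult sign_idempotent)

lemma wedge_lap:
  fixes \<theta> \<beta> :: "'n::finite form"
  assumes th: "alt_form 1 \<theta>" and be: "alt_form k \<beta>"
  shows "wedge 1 k \<theta> \<beta> v = lap k \<theta> \<beta> v"
proof -
  define P where "P = {\<sigma>. \<sigma> permutes {..<Suc k}}"
  define T where "T = {\<tau>. \<tau> permutes {..<k}}"
  define \<Phi> where "\<Phi> = (\<lambda>(m, \<tau>). cyc m \<circ> liftp \<tau>)"
  define f where "f = (\<lambda>\<sigma>. of_int (sign \<sigma>) * \<theta> (\<lambda>i. v (\<sigma> i)) * \<beta> (\<lambda>i. v (\<sigma> (i + 1))))"
  have fin: "finite T" "finite P" unfolding T_def P_def by (auto intro: finite_permutations)
  have inj: "inj_on \<Phi> ({..<Suc k} \<times> T)"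
  proof (rule inj_onI)
    fix x y assume x: "x \<in> {..<Suc k} \<times> T" and y: "y \<in> {..<Suc k} \<times> T" and e: "\<Phi> x = \<Phi> y"
    obtain m \<tau> where xm: "x = (m, \<tau>)" by fastforce
    obtain m' \<tau>' where ym: "y = (m', \<tau>')" by fastforce
    have "m = m'" using fun_cong[OF e, of 0] unfolding xm ym \<Phi>_def by simp
    then have e2: "cyc m \<circ> liftp \<tau> = cyc m \<circ> liftp \<tau>'" using e unfolding xm ym \<Phi>_def by simp
    have "inj (cyc m)" using cyc_perm[of m "Suc k"] x xm permutes_inj by auto
    then have "liftp \<tau> = liftp \<tau>'" using e2 by (metis fun.inj_map_strong inj_def)
    then show "x = y" using xm ym \<open>m = m'\<close> liftp_inj by simp
  qed
  have sub: "\<Phi> ` ({..<Suc k} \<times> T) \<subseteq> P"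
  proof
    fix \<sigma> assume "\<sigma> \<in> \<Phi> ` ({..<Suc k} \<times> T)"
    then obtain m \<tau> where "m < Suc k" "\<tau> \<in> T" "\<sigma> = cyc m \<circ> liftp \<tau>" unfolding \<Phi>_def by auto
    then show "\<sigma> \<in> P" unfolding P_def T_def
      using cyc_perm[of m "Suc k"] liftp_perm[of \<tau> k] permutes_compose by auto
  qed
  have "card (\<Phi> ` ({..<Suc k} \<times> T)) = card P"
    using card_image[OF inj] fin unfolding P_def T_def
    by (simp add: card_cartesian_product card_permutations)
  then have img: "\<Phi> ` ({..<Suc k} \<times> T) = P" using card_subset_eq[OF fin(2) sub] by simp
  have termeq: "f (\<Phi> (m, \<tau>)) = (-1)^m * \<theta> (\<lambda>_. v m) * \<beta> (v \<circ> dd m)"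
    if "m < Suc k" "\<tau> \<in> T" for m \<tau>
  proof -
    have tp: "\<tau> permutes {..<k}" using that T_def by auto
    have cp: "cyc m permutes {..<Suc k}" "sign (cyc m) = (-1)^m" using cyc_perm[OF that(1)] by auto
    have lp: "liftp \<tau> permutes {..<Suc k}" "sign (liftp \<tau>) = sign \<tau>" using liftp_perm[OF tp] by auto
    have sg: "sign (cyc m \<circ> liftp \<tau>) = (-1)^m * sign \<tau>"
      using sign_compose[of "cyc m" "liftp \<tau>"] cp lp
      by (metis finite_lessThan permutation_permutes)
    have t1: "\<theta> (\<lambda>i. v ((cyc m \<circ> liftp \<tau>) i)) = \<theta> (\<lambda>_. v m)"
      by (rule alt_dep[OF th]) simp
    have "\<beta> (\<lambda>i. v ((cyc m \<circ> liftp \<tau>) (i + 1))) = \<beta> ((v \<circ> dd m) \<circ> \<tau>)"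
      by (simp add: comp_def)
    also have "\<dots> = of_int (sign \<tau>) * \<beta> (v \<circ> dd m)" by (rule alt_perm[OF be tp])
    finally have t2: "\<beta> (\<lambda>i. v ((cyc m \<circ> liftp \<tau>) (i + 1))) = of_int (sign \<tau>) * \<beta> (v \<circ> dd m)" .
    have "f (\<Phi> (m, \<tau>)) = (-1)^m * (of_int (sign \<tau>) * of_int (sign \<tau>)) * \<theta> (\<lambda>_. v m) * \<beta> (v \<circ> dd m)"
      unfolding f_def \<Phi>_def using sg t1 t2 by (simp add: algebra_simps)
    then show ?thesis by (simp add: sign_sq_real)
  qed
  have "(\<Sum>\<sigma>\<in>P. f \<sigma>) = (\<Sum>x\<in>{..<Suc k} \<times> T. f (\<Phi> x))"
    unfolding img[symmetric] by (rule sum.reindex[OF inj, unfolded comp_def])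
  also have "\<dots> = (\<Sum>m<Suc k. \<Sum>\<tau>\<in>T. f (\<Phi> (m, \<tau>)))"
    by (subst sum.cartesian_product) (simp add: case_prod_unfold)
  also have "\<dots> = (\<Sum>m<Suc k. \<Sum>\<tau>\<in>T. (-1)^m * \<theta> (\<lambda>_. v m) * \<beta> (v \<circ> dd m))"
    using termeq by (intro sum.cong) auto
  also have "\<dots> = fact k * lap k \<theta> \<beta> v"
    unfolding lap_def T_def by (simp add: card_permutations sum_distrib_left del: sum.lessThan_Suc)
  finally have "(\<Sum>\<sigma>\<in>P. f \<sigma>) = fact k * lap k \<theta> \<beta> v" .
  then show ?thesis unfolding wedge_def P_def f_def by simp
qed

lemma linear_cmul_real: 
  assumes "linear (g :: 'a::real_vector \<Rightarrow> real)" shows "linear (\<lambda>x. c * g x)"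
  unfolding linear_iff
  by (simp add: linear_add[OF assms] linear_cmul[OF assms] distrib_left)

lemma linear_comb_real: "linear (f :: 'a::real_vector \<Rightarrow> real) \<Longrightarrow> linear g \<Longrightarrow> linear (\<lambda>x. a * f x + b * g x)"
  by (intro module_hom_add linear_cmul_real)

lemma alt_comb:
  assumes "alt_form k f" "alt_form k g"
  shows "alt_form k (\<lambda>v. a * f v + b * g v)"
proof -
  have "(\<forall>v w. (\<forall>i<k. v i = w i) \<longrightarrow> a * f v + b * g v = a * f w + b * g w)"
  proof (intro allI impI)
    fix v w :: "nat \<Rightarrow> real^'a" assume h: "\<forall>i<k. v i = w i"
    have "f v = f w" by (rule alt_dep[OF assms(1)]) (use h in auto)
    moreover have "g v = g w" by (rule alt_dep[OF assms(2)]) (use h in auto)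
    ultimately show "a * f v + b * g v = a * f w + b * g w" by simp
  qed
  moreover have "\<forall>v. \<forall>i<k. linear (\<lambda>x. a * f (v(i := x)) + b * g (v(i := x)))"
    using alt_lin[OF assms(1)] alt_lin[OF assms(2)] by (auto intro: linear_comb_real)
  moreover have "\<forall>v i j. i < k \<and> j < k \<and> i \<noteq> j \<and> v i = v j \<longrightarrow> a * f v + b * g v = 0"
    using alt_zero[OF assms(1)] alt_zero[OF assms(2)] by auto
  ultimately show ?thesis unfolding alt_form_def by blast
qed

lemma linear_vec_nth_real: "linear (\<lambda>x::real^'n. x $ j)"
  by (auto simp: linear_iff)

definition dx :: "'n::finite \<Rightarrow> 'n form" where "dx j = (\<lambda>v. v 0 $ j)"

lemma alt_dx: "alt_form 1 (dx j)"
  unfolding alt_form_def dx_def by (auto simp: linear_vec_nth_real)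

lemma lin_expand:
  fixes g :: "real^'n::finite \<Rightarrow> real"
  assumes "linear g"
  shows "g x = (\<Sum>j\<in>UNIV. x $ j * g (axis j 1))"
proof -
  have "g x = g (\<Sum>j\<in>UNIV. x $ j *\<^sub>R axis j 1)"
    using basis_expansion[of x] by (simp add: scalar_mult_eq_scaleR)
  also have "\<dots> = (\<Sum>j\<in>UNIV. g (x $ j *\<^sub>R axis j 1))"
    by (rule linear_sum[OF assms])
  also have "\<dots> = (\<Sum>j\<in>UNIV. x $ j * g (axis j 1))"
    by (simp add: linear_cmul[OF assms])
  finally show ?thesis .
qed

lemma alt1_apply: "alt_form 1 \<theta> \<Longrightarrow> \<theta> v = \<theta> (\<lambda>_. v 0)"
  by (rule alt_dep) auto

lemma alt1_linear: 
  assumes "alt_form 1 \<theta>"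
  shows "linear (\<lambda>x. \<theta> (\<lambda>_. x))"
proof -
  have "(\<lambda>x. \<theta> (\<lambda>_. x)) = (\<lambda>x. \<theta> ((\<lambda>_. 0)(0 := x)))"
    using alt_dep[OF assms] by (intro ext) (metis fun_upd_same less_one)
  then show ?thesis using alt_lin[OF assms, of 0] by simp
qed

lemma alt1_expand:
  fixes \<theta> :: "'n::finite form"
  assumes "alt_form 1 \<theta>"
  shows "\<theta> = (\<lambda>v. \<Sum>j\<in>UNIV. \<theta> (\<lambda>_. axis j 1) * dx j v)"
proof
  fix v
  have "\<theta> v = \<theta> (\<lambda>_. v 0)" by (rule alt1_apply[OF assms])
  also have "\<dots> = (\<Sum>j\<in>UNIV. v 0 $ j * \<theta> (\<lambda>_. axis j 1))"
    by (rule lin_expand[OF alt1_linear[OF assms]])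
  finally show "\<theta> v = (\<Sum>j\<in>UNIV. \<theta> (\<lambda>_. axis j 1) * dx j v)"
    by (simp add: dx_def mult.commute)
qed

lemma vcons_0[simp]: "vcons a w 0 = a" by (simp add: vcons_def)
lemma vcons_Suc[simp]: "vcons a w (Suc i) = w i" by (simp add: vcons_def)
lemma vcons_dd0: "vcons a v \<circ> dd 0 = v" by (auto simp: fun_eq_iff dd_def)
lemma vcons_ddSuc: "vcons a v \<circ> dd (Suc m) = vcons a (v \<circ> dd m)"
  by (auto simp: fun_eq_iff dd_def vcons_def)

lemma move_front:
  assumes "alt_form k \<beta>" "m < k"
  shows "\<beta> (vcons (v m) (v \<circ> dd m)) = (-1)^m * \<beta> v"
proof -
  have "vcons (v m) (v \<circ> dd m) = v \<circ> cyc m"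
    by (auto simp: fun_eq_iff vcons_def cyc_def dd_def)
  then show ?thesis using alt_perm[OF assms(1), of "cyc m" v] cyc_perm[OF assms(2)] by simp
qed

lemma slot0_expand:
  fixes \<beta> :: "'n::finite form"
  assumes "alt_form k \<beta>" "1 \<le> k"
  shows "(\<Sum>j\<in>UNIV. x $ j * \<beta> (vcons (axis j 1) w)) = \<beta> (vcons x w)"
proof -
  have e: "vcons y w = (vcons 0 w)(0 := y)" for y by (auto simp: fun_eq_iff vcons_def)
  have "linear (\<lambda>y. \<beta> ((vcons 0 w)(0 := y)))" using alt_lin[OF assms(1)] assms(2) by simp
  from lin_expand[OF this, of x] show ?thesis unfolding e[symmetric] by simp
qed

lemma lap_add1: "lap k (\<lambda>v. \<theta>1 v + \<theta>2 v) \<beta> u = lap k \<theta>1 \<beta> u + lap k \<theta>2 \<beta> u"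
  unfolding lap_def by (simp add: distrib_left distrib_right sum.distrib del: sum.lessThan_Suc)
lemma lap_add2: "lap k \<theta> (\<lambda>v. \<beta>1 v + \<beta>2 v) u = lap k \<theta> \<beta>1 u + lap k \<theta> \<beta>2 u"
  unfolding lap_def by (simp add: distrib_left distrib_right sum.distrib del: sum.lessThan_Suc)

lemma lap_vcons: "lap k \<theta> \<beta> (vcons a v) =
   \<theta> (\<lambda>_. a) * \<beta> v - (\<Sum>m<k. (-1)^m * \<theta> (\<lambda>_. v m) * \<beta> (vcons a (v \<circ> dd m)))"
  unfolding lap_def sum.lessThan_Suc_shift
  by (simp add: vcons_dd0 vcons_ddSuc sum_negf[symmetric] del: sum.lessThan_Suc)

lemma dd_comm: "q < m \<Longrightarrow> dd m \<circ> dd q = dd q \<circ> dd (m - 1)"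
  by (auto simp: fun_eq_iff dd_def)

lemma lap_lap_zero: "lap (Suc K) \<theta> (lap K \<theta> \<eta>) v = 0"
proof -
  define ll where "ll x = \<theta> (\<lambda>_. x)" for x
  define A where "A = {..<Suc (Suc K)}"
  define e where "e m q = (if q < m then q else q - 1)" for m q :: nat
  define g where "g m q = (-1)^(m + e m q) * ll (v m) * ll (v q) * \<eta> (v \<circ> dd m \<circ> dd (e m q))" for m q
  define G where "G m q = (if q = m then 0 else g m q)" for m q
  have gas: "g m q = - g q m" if qm: "q < m" for m q
  proof -
    obtain m' where m: "m = Suc m'" using qm by (cases m) auto
    have "e m q = q" "e q m = m - 1" using qm by (auto simp: e_def)
    moreover have "v \<circ> dd m \<circ> dd q = v \<circ> dd q \<circ> dd (m - 1)" using dd_comm[OF qm] by (metis comp_assoc)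
    moreover have "(-1::real)^(m+q) = - ((-1)^(q + (m-1)))" using m by (simp add: add.commute)
    ultimately show ?thesis unfolding g_def by (simp only: mult_ac)
  qed
  have Gas: "G m q = - G q m" for m q
  proof (cases "q < m")
    case True then show ?thesis using gas[OF True] by (simp add: G_def)
  next
    case False
    show ?thesis
    proof (cases "q = m")
      case True then show ?thesis by (simp add: G_def)
    next
      case qm: False
      with False have "m < q" by simp
      from gas[OF this] qm show ?thesis by (simp add: G_def)
    qed
  qed
  have step1: "(-1)^m * ll (v m) * lap K \<theta> \<eta> (v \<circ> dd m) = (\<Sum>q\<in>A. G m q)" if m: "m \<in> A" for m
  proof -
    have bij: "bij_betw (e m) (A - {m}) {..<Suc K}"
    proof (rule bij_betw_byWitness[where f'="dd m"])
      show "\<forall>a\<in>A - {m}. dd m (e m a) = a" by (auto simp: e_def dd_def)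
      show "\<forall>a\<in>{..<Suc K}. e m (dd m a) = a" by (auto simp: e_def dd_def)
      show "e m ` (A - {m}) \<subseteq> {..<Suc K}" using m by (auto simp: e_def A_def)
      show "dd m ` {..<Suc K} \<subseteq> A - {m}" using m by (auto simp: dd_def A_def)
    qed
    have "lap K \<theta> \<eta> (v \<circ> dd m) = (\<Sum>p<Suc K. (-1)^p * ll (v (dd m p)) * \<eta> (v \<circ> dd m \<circ> dd p))"
      unfolding lap_def ll_def by (simp add: o_assoc del: sum.lessThan_Suc)
    also have "\<dots> = (\<Sum>q\<in>A - {m}. (-1)^(e m q) * ll (v (dd m (e m q))) * \<eta> (v \<circ> dd m \<circ> dd (e m q)))"
      by (rule sum.reindex_bij_betw[OF bij, symmetric])
    also have "\<dots> = (\<Sum>q\<in>A - {m}. (-1)^(e m q) * ll (v q) * \<eta> (v \<circ> dd m \<circ> dd (e m q)))"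
    proof (intro sum.cong refl)
      fix q assume "q \<in> A - {m}"
      then have "dd m (e m q) = q" by (auto simp: e_def dd_def)
      then show "(-1)^(e m q) * ll (v (dd m (e m q))) * \<eta> (v \<circ> dd m \<circ> dd (e m q)) =
         (-1)^(e m q) * ll (v q) * \<eta> (v \<circ> dd m \<circ> dd (e m q))" by simp
    qed
    finally have l: "lap K \<theta> \<eta> (v \<circ> dd m) = \<dots>" .
    have "(\<Sum>q\<in>A. G m q) = G m m + (\<Sum>q\<in>A - {m}. G m q)"
      using m unfolding A_def by (rule sum.remove[OF finite_lessThan])
    also have "\<dots> = (\<Sum>q\<in>A - {m}. g m q)" by (simp add: G_def)
    finally show ?thesis unfolding l g_def
      by (simp add: sum_distrib_left power_add algebra_simps)
  qed
  have "lap (Suc K) \<theta> (lap K \<theta> \<eta>) v = (\<Sum>m\<in>A. (-1)^m * ll (v m) * lap K \<theta> \<eta> (v \<circ> dd m))"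
    unfolding lap_def ll_def A_def by (simp del: sum.lessThan_Suc)
  also have "\<dots> = (\<Sum>m\<in>A. \<Sum>q\<in>A. G m q)" using step1 by (intro sum.cong) auto
  finally have S: "lap (Suc K) \<theta> (lap K \<theta> \<eta>) v = (\<Sum>m\<in>A. \<Sum>q\<in>A. G m q)" .
  have "(\<Sum>m\<in>A. \<Sum>q\<in>A. G m q) = (\<Sum>q\<in>A. \<Sum>m\<in>A. G m q)" by (rule sum.swap)
  also have "\<dots> = (\<Sum>q\<in>A. \<Sum>m\<in>A. - G q m)" by (intro sum.cong refl) (rule Gas)
  also have "\<dots> = - (\<Sum>m\<in>A. \<Sum>q\<in>A. G m q)" by (simp add: sum_negf)
  finally show ?thesis using S by simp
qed

theorem proposition4p1:
  fixes etabar :: "'n::finite form \<Rightarrow> 'n form" and k :: nat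
  assumes "CARD('n) \<ge> 2" and "1 \<le> k" and "k \<le> CARD('n)"
    and "\<forall>\<theta>. alt_form 1 \<theta> \<longrightarrow> alt_form k (etabar \<theta>)"
    and "\<forall>\<theta>1 \<theta>2 a b. alt_form 1 \<theta>1 \<longrightarrow> alt_form 1 \<theta>2 \<longrightarrow>
           etabar (\<lambda>v. a * \<theta>1 v + b * \<theta>2 v) = (\<lambda>v. a * etabar \<theta>1 v + b * etabar \<theta>2 v)"
  shows "(\<exists>\<eta>. alt_form (k - 1) \<eta> \<and>
            (\<forall>\<theta>. alt_form 1 \<theta> \<longrightarrow> etabar \<theta> = wedge 1 (k - 1) \<theta> \<eta>))
         \<longleftrightarrow> (\<forall>\<theta>. alt_form 1 \<theta> \<longrightarrow> wedge 1 k \<theta> (etabar \<theta>) = (\<lambda>v. 0))"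
proof -
  have alt: "alt_form k (etabar \<theta>)" if "alt_form 1 \<theta>" for \<theta> using assms(4) that by blast
  have lin: "etabar (\<lambda>v. a * \<theta>1 v + b * \<theta>2 v) = (\<lambda>v. a * etabar \<theta>1 v + b * etabar \<theta>2 v)"
    if "alt_form 1 \<theta>1" "alt_form 1 \<theta>2" for \<theta>1 \<theta>2 a b using assms(5) that by blast
  obtain K where kK: "k = Suc K" using assms(2) by (cases k) auto
  define B where "B j = etabar (dx j)" for j
  have Balt: "alt_form k (B j)" for j unfolding B_def by (rule alt[OF alt_dx])
  have esum: "alt_form 1 (\<lambda>v. \<Sum>i\<in>S. a i * dx i v) \<and>
      etabar (\<lambda>v. \<Sum>i\<in>S. a i * dx i v) = (\<lambda>v. \<Sum>i\<in>S. a i * B i v)" if "finite S" for S a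
    using that
  proof (induction S rule: finite_induct)
    case empty
    have z: "alt_form 1 (\<lambda>v. 0 * dx undefined v + 0 * dx undefined v)" by (intro alt_comb alt_dx)
    have "etabar (\<lambda>v. 0 * dx undefined v + 0 * dx undefined v) = (\<lambda>v. 0 * etabar (dx undefined) v + 0 * etabar (dx undefined) v)"
      by (intro lin alt_dx)
    then show ?case using z by simp
  next
    case (insert x F)
    have a1: "alt_form 1 (\<lambda>v. a x * dx x v + 1 * (\<Sum>i\<in>F. a i * dx i v))"
      using insert.IH by (intro alt_comb alt_dx) auto
    have "etabar (\<lambda>v. a x * dx x v + 1 * (\<Sum>i\<in>F. a i * dx i v)) =
        (\<lambda>v. a x * etabar (dx x) v + 1 * etabar (\<lambda>v. \<Sum>i\<in>F. a i * dx i v) v)"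
      using insert.IH by (intro lin alt_dx) auto
    then show ?case using a1 insert by (simp add: B_def)
  qed
  have eexp: "etabar \<theta> v = (\<Sum>j\<in>UNIV. \<theta> (\<lambda>_. axis j 1) * B j v)" if th: "alt_form 1 \<theta>" for \<theta> v
  proof -
    have "etabar \<theta> = etabar (\<lambda>v. \<Sum>j\<in>UNIV. \<theta> (\<lambda>_. axis j 1) * dx j v)"
      using alt1_expand[OF th] by (rule arg_cong)
    also have "\<dots> = (\<lambda>v. \<Sum>j\<in>UNIV. \<theta> (\<lambda>_. axis j 1) * B j v)"
      using esum[OF finite, of "\<lambda>j. \<theta> (\<lambda>_. axis j 1)"] by (rule conjunct2)
    finally show ?thesis by (rule fun_cong)
  qed
  show ?thesis
  proof
    assume "\<exists>\<eta>. alt_form (k - 1) \<eta> \<and> (\<forall>\<theta>. alt_form 1 \<theta> \<longrightarrow> etabar \<theta> = wedge 1 (k - 1) \<theta> \<eta>)"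
    then obtain \<eta> where ea: "alt_form K \<eta>" and eq: "\<And>\<theta>. alt_form 1 \<theta> \<Longrightarrow> etabar \<theta> = wedge 1 K \<theta> \<eta>"
      using kK by auto
    show "\<forall>\<theta>. alt_form 1 \<theta> \<longrightarrow> wedge 1 k \<theta> (etabar \<theta>) = (\<lambda>v. 0)"
    proof (intro allI impI ext)
      fix \<theta> :: "'n form" and v assume th: "alt_form 1 \<theta>"
      have "etabar \<theta> = lap K \<theta> \<eta>" using eq[OF th] wedge_lap[OF th ea] by auto
      then show "wedge 1 k \<theta> (etabar \<theta>) v = 0"
        using wedge_lap[OF th alt[OF th], of v] lap_lap_zero[of K \<theta> \<eta> v] kK by simp
    qed
  next
    assume H: "\<forall>\<theta>. alt_form 1 \<theta> \<longrightarrow> wedge 1 k \<theta> (etabar \<theta>) = (\<lambda>v. 0)"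
    have H0: "lap k \<theta> (etabar \<theta>) u = 0" if "alt_form 1 \<theta>" for \<theta> u
      using H that wedge_lap[OF that alt[OF that], of u] by metis
    have polar: "lap k \<theta> (etabar \<phi>) u + lap k \<phi> (etabar \<theta>) u = 0"
      if th: "alt_form 1 \<theta>" and ph: "alt_form 1 \<phi>" for \<theta> \<phi> u
    proof -
      have ps: "alt_form 1 (\<lambda>v. 1 * \<theta> v + 1 * \<phi> v)" by (intro alt_comb th ph)
      have "etabar (\<lambda>v. 1 * \<theta> v + 1 * \<phi> v) = (\<lambda>v. 1 * etabar \<theta> v + 1 * etabar \<phi> v)"
        by (intro lin th ph)
      with H0[OF ps, of u] have "lap k (\<lambda>v. \<theta> v + \<phi> v) (\<lambda>v. etabar \<theta> v + etabar \<phi> v) u = 0"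
        by simp
      then show ?thesis using H0[OF th, of u] H0[OF ph, of u] by (simp add: lap_add1 lap_add2)
    qed
    define n where "n = CARD('n)"
    define c where "c = 1 / (real n + 1 - real k)"
    define \<eta> where "\<eta> w = c * (\<Sum>j\<in>UNIV. B j (vcons (axis j 1) w))" for w
    have vupd: "vcons a (w(i := x)) = (vcons a w)(Suc i := x)" for a w i x
      by (auto simp: fun_eq_iff vcons_def)
    have ealt: "alt_form K \<eta>"
      unfolding alt_form_def
    proof (intro conjI allI impI)
      fix v w :: "nat \<Rightarrow> real^'n" assume h: "\<forall>i<K. v i = w i"
      have "B j (vcons (axis j 1) v) = B j (vcons (axis j 1) w)" for j
        by (rule alt_dep[OF Balt]) (use h kK in \<open>auto simp: vcons_def\<close>)
      then show "\<eta> v = \<eta> w" unfolding \<eta>_def by simp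
    next
      fix v :: "nat \<Rightarrow> real^'n" and i assume i: "i < K"
      have "linear (\<lambda>x. B j ((vcons (axis j 1) v)(Suc i := x)))" for j
        using alt_lin[OF Balt] i kK by simp
      then have "linear (\<lambda>x. \<Sum>j\<in>UNIV. B j ((vcons (axis j 1) v)(Suc i := x)))"
        by (intro linear_compose_sum) auto
      then have "linear (\<lambda>x. c * (\<Sum>j\<in>UNIV. B j ((vcons (axis j 1) v)(Suc i := x))))"
        by (rule linear_cmul_real)
      then show "linear (\<lambda>x. \<eta> (v(i := x)))" unfolding \<eta>_def vupd .
    next
      fix v :: "nat \<Rightarrow> real^'n" and i j assume h: "i < K \<and> j < K \<and> i \<noteq> j \<and> v i = v j"
      have "B l (vcons (axis l 1) v) = 0" for l
        by (rule alt_zero[OF Balt, of "Suc i" "Suc j"]) (use h kK in auto)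
      then show "\<eta> v = 0" unfolding \<eta>_def by simp
    qed
    have main: "etabar \<theta> v = lap K \<theta> \<eta> v" if th: "alt_form 1 \<theta>" for \<theta> v
    proof -
      define \<beta> where "\<beta> = etabar \<theta>"
      have balt: "alt_form k \<beta>" unfolding \<beta>_def by (rule alt[OF th])
      define A where "A j = (\<Sum>m<k. (-1)^m * \<theta> (\<lambda>_. v m) * B j (vcons (axis j 1) (v \<circ> dd m)))" for j
      define Bp where "Bp j = (\<Sum>m<k. (-1)^m * (v m $ j) * \<beta> (vcons (axis j 1) (v \<circ> dd m)))" for j
      have "lap K \<theta> \<eta> v = (\<Sum>m<k. \<Sum>j\<in>UNIV. c * ((-1)^m * \<theta> (\<lambda>_. v m) * B j (vcons (axis j 1) (v \<circ> dd m))))"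
        unfolding lap_def \<eta>_def kK by (simp add: sum_distrib_left mult_ac del: sum.lessThan_Suc)
      also have "\<dots> = (\<Sum>j\<in>UNIV. \<Sum>m<k. c * ((-1)^m * \<theta> (\<lambda>_. v m) * B j (vcons (axis j 1) (v \<circ> dd m))))"
        by (rule sum.swap)
      also have "\<dots> = c * (\<Sum>j\<in>UNIV. A j)" by (simp add: A_def sum_distrib_left)
      finally have l1: "lap K \<theta> \<eta> v = c * (\<Sum>j\<in>UNIV. A j)" .
      have l2: "A j = \<theta> (\<lambda>_. axis j 1) * B j v + \<beta> v - Bp j" for j
      proof -
        have p: "lap k \<theta> (B j) (vcons (axis j 1) v) + lap k (dx j) \<beta> (vcons (axis j 1) v) = 0"
          using polar[OF th alt_dx, of j "vcons (axis j 1) v"] unfolding B_def \<beta>_def .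
        have "lap k (dx j) \<beta> (vcons (axis j 1) v) = \<beta> v - Bp j"
          unfolding lap_vcons Bp_def by (simp add: dx_def)
        moreover have "lap k \<theta> (B j) (vcons (axis j 1) v) = \<theta> (\<lambda>_. axis j 1) * B j v - A j"
          unfolding lap_vcons A_def by simp
        ultimately show ?thesis using p by simp
      qed
      have l3: "(\<Sum>j\<in>UNIV. \<theta> (\<lambda>_. axis j 1) * B j v) = \<beta> v"
        unfolding \<beta>_def using eexp[OF th, of v] by simp
      have "(\<Sum>j\<in>UNIV. Bp j) = (\<Sum>m<k. \<Sum>j\<in>UNIV. (-1)^m * ((v m $ j) * \<beta> (vcons (axis j 1) (v \<circ> dd m))))"
        unfolding Bp_def by (subst sum.swap) (simp add: mult_ac)
      also have "\<dots> = (\<Sum>m<k. (-1)^m * \<beta> (vcons (v m) (v \<circ> dd m)))"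
        by (simp add: sum_distrib_left[symmetric] slot0_expand[OF balt assms(2)])
      also have "\<dots> = (\<Sum>m<k. \<beta> v)"
        by (intro sum.cong refl) (simp add: move_front[OF balt])
      finally have l4: "(\<Sum>j\<in>UNIV. Bp j) = real k * \<beta> v" by simp
      have "(\<Sum>j\<in>UNIV. A j) = (\<Sum>j\<in>UNIV. \<theta> (\<lambda>_. axis j 1) * B j v) + (\<Sum>j\<in>(UNIV::'n set). \<beta> v) - (\<Sum>j\<in>UNIV. Bp j)"
        unfolding l2 by (simp add: sum.distrib sum_subtractf)
      also have "\<dots> = (real n + 1 - real k) * \<beta> v" unfolding l3 l4 n_def by (simp add: algebra_simps)
      finally have l5: "(\<Sum>j\<in>UNIV. A j) = (real n + 1 - real k) * \<beta> v" .
      have pos: "real n + 1 - real k > 0" using assms(3) n_def by simp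
      show ?thesis unfolding l1 l5 c_def \<beta>_def using pos by simp
    qed
    show "\<exists>\<eta>. alt_form (k - 1) \<eta> \<and> (\<forall>\<theta>. alt_form 1 \<theta> \<longrightarrow> etabar \<theta> = wedge 1 (k - 1) \<theta> \<eta>)"
    proof (intro exI conjI allI impI ext)
      show "alt_form (k - 1) \<eta>" using ealt kK by simp
      fix \<theta> :: "'n form" and v assume th: "alt_form 1 \<theta>"
      show "etabar \<theta> v = wedge 1 (k - 1) \<theta> \<eta> v"
        using main[OF th, of v] wedge_lap[OF th ealt, of v] kK by simp
    qed
  qed
qed

end
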